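(* Let $\epsilon>0$, $\delta\ge 0$, $n\ge1$, let $(\mathscr X,\mathscr B)$ be a measurable space, and let $\{\mu_i\}_{i\in I}$ be a set of exchangeable distributions on $\mathscr X^n$. Let $\phi:\mathscr X^n\to[0,1]$ be measurable and satisfy, for all $\underline X,\underline X'\in\mathscr X^n$ with $\delta(\underline X,\underline X')=1$, $$\phi_{\underline X}\le e^\epsilon\phi_{\underline X'}+\delta\quad\text{and}\quad 1-\phi_{\underline X}\le e^\epsilon(1-\phi_{\underline X'})+\delta. \qquad ( * )$$ Define $\phi':\mathscr X^n\to[0,1]$ by $\phi'_{\underline X}=\frac1{n!}\sum_{\pi\in\sigma(n)}\phi_{\pi(\underline X)}$, where $\sigma(n)$ is the symmetric group on $n$ letters acting by permuting coordinates. Then $\phi'$ satisfies $( * )$, $\int\phi'_{\underline X}\,d\mu_i=\int\phi_{\underline X}\,d\mu_i$ for all $i\in I$, and $\phi'$ depends on $\underline X$ only through its empirical distribution $\mathbb P_n$.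
   Context: The Hamming distance on $\mathscr X^n$ is $\delta(\underline X,\underline X')=\#\{i:X_i\ne X'_i\}$. A distribution on $\mathscr X^n$ is exchangeable if it is invariant under permutations of coordinates. The empirical distribution of $\underline X=(X_1,\dots,X_n)$ is $\mathbb P_n(B)=\frac1n\sum_{i=1}^n I_B(X_i)$ for measurable $B\subseteq\mathscr X$; it determines $\underline X$ up to permutation. *)

theory Defs
  imports "HOL-Probability.Probability"
begin

definition prod_space :: "'a measure \<Rightarrow> nat \<Rightarrow> (nat \<Rightarrow> 'a) measure" where
  "prod_space M n = PiM {..<n} (\<lambda>_. M)"

definition hamming :: "nat \<Rightarrow> (nat \<Rightarrow> 'a) \<Rightarrow> (nat \<Rightarrow> 'a) \<Rightarrow> nat" where
  "hamming n x y = card {i \<in> {..<n}. x i \<noteq> y i}"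

definition permute_coords :: "nat \<Rightarrow> (nat \<Rightarrow> nat) \<Rightarrow> (nat \<Rightarrow> 'a) \<Rightarrow> (nat \<Rightarrow> 'a)" where
  "permute_coords n \<pi> x = (\<lambda>j\<in>{..<n}. x (\<pi> j))"

definition exchangeable :: "'a measure \<Rightarrow> nat \<Rightarrow> (nat \<Rightarrow> 'a) measure \<Rightarrow> bool" where
  "exchangeable M n \<mu> \<longleftrightarrow> prob_space \<mu> \<and> sets \<mu> = sets (prod_space M n) \<and>
     (\<forall>\<pi>. \<pi> permutes {..<n} \<longrightarrow> distr \<mu> (prod_space M n) (permute_coords n \<pi>) = \<mu>)"

definition dp_test :: "'a measure \<Rightarrow> nat \<Rightarrow> real \<Rightarrow> real \<Rightarrow> ((nat \<Rightarrow> 'a) \<Rightarrow> real) \<Rightarrow> bool" where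
  "dp_test M n \<epsilon> \<delta> \<phi> \<longleftrightarrow>
     (\<forall>x\<in>space (prod_space M n). \<forall>x'\<in>space (prod_space M n). hamming n x x' = 1 \<longrightarrow>
        \<phi> x \<le> exp \<epsilon> * \<phi> x' + \<delta> \<and> 1 - \<phi> x \<le> exp \<epsilon> * (1 - \<phi> x') + \<delta>)"

definition symmetrize :: "nat \<Rightarrow> ((nat \<Rightarrow> 'a) \<Rightarrow> real) \<Rightarrow> (nat \<Rightarrow> 'a) \<Rightarrow> real" where
  "symmetrize n \<phi> x = (1 / fact n) * (\<Sum>\<pi>\<in>{\<pi>. \<pi> permutes {..<n}}. \<phi> (permute_coords n \<pi> x))"

definition empirical :: "nat \<Rightarrow> (nat \<Rightarrow> 'a) \<Rightarrow> 'a set \<Rightarrow> real" where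
  "empirical n x B = (1 / real n) * (\<Sum>i<n. indicator B (x i))"

end

theory Submission imports Defs "HOL-Combinatorics.Permutations" begin
lemma perm_space:
  assumes "\<pi> permutes {..<n}" "x \<in> space (prod_space M n)"
  shows "permute_coords n \<pi> x \<in> space (prod_space M n)"
  using assms permutes_in_image[OF assms(1)]
  by (auto simp: prod_space_def space_PiM permute_coords_def PiE_iff)

lemma perm_meas:
  assumes "\<pi> permutes {..<n}"
  shows "permute_coords n \<pi> \<in> measurable (prod_space M n) (prod_space M n)"
  unfolding prod_space_def permute_coords_def
  by (rule measurable_restrict) (use permutes_in_image[OF assms] in auto)

lemma perm_hamming:
  fixes x y :: "nat \<Rightarrow> 'a"
  assumes p: "\<pi> permutes {..<n}"
  shows "hamming n (permute_coords n \<pi> x) (permute_coords n \<pi> y) = hamming n x y"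
proof -
  have inj: "inj_on \<pi> A" for A using permutes_inj[OF p] by (simp add: inj_on_def inj_def)
  have img: "\<pi> ` {i \<in> {..<n}. x (\<pi> i) \<noteq> y (\<pi> i)} = {i \<in> {..<n}. x i \<noteq> y i}"
  proof (intro equalityI subsetI)
    fix j assume "j \<in> \<pi> ` {i \<in> {..<n}. x (\<pi> i) \<noteq> y (\<pi> i)}"
    then obtain i where "i < n" "x (\<pi> i) \<noteq> y (\<pi> i)" "j = \<pi> i" by blast
    moreover have "\<pi> i < n" using permutes_in_image[OF p] \<open>i < n\<close> by simp
    ultimately show "j \<in> {i \<in> {..<n}. x i \<noteq> y i}" by simp
  next
    fix j assume j: "j \<in> {i \<in> {..<n}. x i \<noteq> y i}"
    have "\<pi> (inv \<pi> j) = j" using permutes_inverses(1)[OF p] by simp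
    moreover have "inv \<pi> j < n" using j permutes_in_image[OF permutes_inv[OF p]] by simp
    ultimately show "j \<in> \<pi> ` {i \<in> {..<n}. x (\<pi> i) \<noteq> y (\<pi> i)}" using j
      by (metis (mono_tags, lifting) image_eqI lessThan_iff mem_Collect_eq)
  qed
  have "{i \<in> {..<n}. permute_coords n \<pi> x i \<noteq> permute_coords n \<pi> y i}
      = {i \<in> {..<n}. x (\<pi> i) \<noteq> y (\<pi> i)}"
    by (auto simp: permute_coords_def)
  then show ?thesis unfolding hamming_def
    using card_image[OF inj, of "{i \<in> {..<n}. x (\<pi> i) \<noteq> y (\<pi> i)}"] img by simp
qed

lemma indist:
  assumes "z \<in> space (PiM I (\<lambda>_. M))" "w \<in> space (PiM I (\<lambda>_. M))"
    and "\<And>i B. i \<in> I \<Longrightarrow> B \<in> sets M \<Longrightarrow> z i \<in> B \<longleftrightarrow> w i \<in> B"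
    and "S \<in> sets (PiM I (\<lambda>_. M))"
  shows "z \<in> S \<longleftrightarrow> w \<in> S"
proof -
  have "S \<in> sigma_sets (\<Pi>\<^sub>E i\<in>I. space M) {{f\<in>\<Pi>\<^sub>E i\<in>I. space M. f i \<in> A} | i A. i \<in> I \<and> A \<in> sets M}"
    using assms(4) sets_PiM_single[of I "\<lambda>_. M"] by simp
  then show ?thesis
  proof induct
    case (Basic a) then show ?case using assms(1,2,3) by (auto simp: space_PiM)
  next
    case (Compl a) then show ?case using assms(1,2) by (auto simp: space_PiM)
  qed auto
qed

lemma indist_fun:
  assumes "f \<in> borel_measurable (PiM I (\<lambda>_. M))"
    "z \<in> space (PiM I (\<lambda>_. M))" "w \<in> space (PiM I (\<lambda>_. M))"
    and "\<And>i B. i \<in> I \<Longrightarrow> B \<in> sets M \<Longrightarrow> z i \<in> B \<longleftrightarrow> w i \<in> B"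
  shows "f z = (f w :: real)"
proof -
  let ?S = "f -` {f z} \<inter> space (PiM I (\<lambda>_. M))"
  have cl: "{f z} \<in> sets (borel :: real measure)" by (rule borel_singleton) simp
  have S: "?S \<in> sets (PiM I (\<lambda>_. M))"
    by (rule measurable_sets[OF assms(1) cl])
  have "z \<in> ?S" using assms(2) by blast
  then have "w \<in> ?S" using indist[OF assms(2,3,4) S] by blast
  then show ?thesis by simp
qed

lemma sep_set:
  assumes "finite P" "P \<subseteq> space M" "a \<in> space M"
  shows "\<exists>B\<in>sets M. a \<in> B \<and> (\<forall>p\<in>P. p \<in> B \<longleftrightarrow> (\<forall>C\<in>sets M. p \<in> C \<longleftrightarrow> a \<in> C))"
  using assms(1,2)
proof (induction P rule: finite_induct)
  case empty
  then show ?case using assms(3) by (intro bexI[of _ "space M"]) auto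
next
  case (insert q P)
  then obtain B where B: "B \<in> sets M" "a \<in> B"
    "\<forall>p\<in>P. p \<in> B \<longleftrightarrow> (\<forall>C\<in>sets M. p \<in> C \<longleftrightarrow> a \<in> C)" by auto
  show ?case
  proof (cases "\<forall>C\<in>sets M. q \<in> C \<longleftrightarrow> a \<in> C")
    case True
    then show ?thesis using B by (intro bexI[of _ B]) auto
  next
    case False
    then obtain C where C: "C \<in> sets M" "\<not> (q \<in> C \<longleftrightarrow> a \<in> C)" by auto
    define C' where "C' = (if a \<in> C then C else space M - C)"
    have C': "C' \<in> sets M" "a \<in> C'" "q \<notin> C'"
      using C assms(3) insert.prems by (auto simp: C'_def)
    show ?thesis
    proof (intro bexI[of _ "B \<inter> C'"] conjI ballI)
      fix p assume p: "p \<in> insert q P"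
      show "p \<in> B \<inter> C' \<longleftrightarrow> (\<forall>C\<in>sets M. p \<in> C \<longleftrightarrow> a \<in> C)"
      proof
        assume "p \<in> B \<inter> C'"
        then show "\<forall>C\<in>sets M. p \<in> C \<longleftrightarrow> a \<in> C" using p B C' by auto
      next
        assume h: "\<forall>C\<in>sets M. p \<in> C \<longleftrightarrow> a \<in> C"
        then have "p \<in> C'" using C' by auto
        moreover have "p \<in> B" using h B by auto
        ultimately show "p \<in> B \<inter> C'" by auto
      qed
    qed (use B C' in auto)
  qed
qed

lemma count_eq:
  fixes x y :: "nat \<Rightarrow> 'a"
  assumes "n \<ge> 1" "\<And>i. i < n \<Longrightarrow> x i \<in> space M" "\<And>i. i < n \<Longrightarrow> y i \<in> space M"
    and emp: "\<forall>B\<in>sets M. empirical n x B = empirical n y B"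
  shows "image_mset (\<lambda>i. {B\<in>sets M. y i \<in> B}) (mset_set {..<n})
       = image_mset (\<lambda>i. {B\<in>sets M. x i \<in> B}) (mset_set {..<n})"
proof (rule multiset_eqI)
  fix c
  have cnt: "card {i\<in>{..<n}. x i \<in> B} = card {i\<in>{..<n}. y i \<in> B}" if "B \<in> sets M" for B
  proof -
    have "empirical n x B = empirical n y B" using emp that by auto
    then have "(\<Sum>i<n. indicator B (x i) :: real) = (\<Sum>i<n. indicator B (y i))"
      using assms(1) by (simp add: empirical_def)
    moreover have "(\<Sum>i<n. indicator B (z i) :: real) = real (card {i\<in>{..<n}. z i \<in> B})" for z :: "nat \<Rightarrow> 'a"
    proof -
      have "(\<Sum>i<n. indicator B (z i) :: real) = (\<Sum>i<n. indicator (z -` B) i)"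
        by (simp add: indicator_def)
      also have "\<dots> = real (card ({..<n} \<inter> z -` B))" by (simp add: indicator_def sum.If_cases Int_def)
      also have "{..<n} \<inter> z -` B = {i\<in>{..<n}. z i \<in> B}" by auto
      finally show ?thesis .
    qed
    ultimately show ?thesis by simp
  qed
  show "count (image_mset (\<lambda>i. {B\<in>sets M. y i \<in> B}) (mset_set {..<n})) c
      = count (image_mset (\<lambda>i. {B\<in>sets M. x i \<in> B}) (mset_set {..<n})) c"
  proof (cases "\<exists>a\<in>x ` {..<n} \<union> y ` {..<n}. c = {B\<in>sets M. a \<in> B}")
    case True
    then obtain a where a: "a \<in> x ` {..<n} \<union> y ` {..<n}" "c = {B\<in>sets M. a \<in> B}" by blast
    have aM: "a \<in> space M" using a(1) assms(2,3) by auto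
    have PM: "x ` {..<n} \<union> y ` {..<n} \<subseteq> space M" using assms(2,3) by auto
    obtain B where B: "B \<in> sets M" "a \<in> B"
      "\<forall>p\<in>x ` {..<n} \<union> y ` {..<n}. p \<in> B \<longleftrightarrow> (\<forall>C\<in>sets M. p \<in> C \<longleftrightarrow> a \<in> C)"
      using sep_set[OF _ PM aM] by blast
    have eqv: "{B\<in>sets M. p \<in> B} = c \<longleftrightarrow> (\<forall>C\<in>sets M. p \<in> C \<longleftrightarrow> a \<in> C)" for p
      unfolding a(2) by blast
    have "{i\<in>{..<n}. {B\<in>sets M. x i \<in> B} = c} = {i\<in>{..<n}. x i \<in> B}"
      using B(3) eqv by auto
    moreover have "{i\<in>{..<n}. {B\<in>sets M. y i \<in> B} = c} = {i\<in>{..<n}. y i \<in> B}"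
      using B(3) eqv by auto
    ultimately show ?thesis using cnt[OF B(1)]
      by (simp add: count_image_mset_eq_card_vimage)
  next
    case False
    then have "{i\<in>{..<n}. {B\<in>sets M. x i \<in> B} = c} = {}" "{i\<in>{..<n}. {B\<in>sets M. y i \<in> B} = c} = {}"
      by auto
    then show ?thesis by (simp only: count_image_mset_eq_card_vimage[OF finite_lessThan])
  qed
qed
lemma sum_aff:
  fixes f :: "'b \<Rightarrow> real"
  assumes "finite P"
  shows "(\<Sum>\<pi>\<in>P. e * f \<pi> + d) = e * (\<Sum>\<pi>\<in>P. f \<pi>) + real (card P) * d"
  by (simp add: sum.distrib sum_distrib_left)

lemma sum_one_minus:
  fixes f :: "'b \<Rightarrow> real"
  assumes "finite P"
  shows "(\<Sum>\<pi>\<in>P. 1 - f \<pi>) = real (card P) - (\<Sum>\<pi>\<in>P. f \<pi>)"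
  by (simp add: sum_subtractf)

lemma div_ineq:
  fixes a b F e d :: real
  assumes "F > 0" "a \<le> e * b + F * d" "F - a \<le> e * (F - b) + F * d"
  shows "a / F \<le> e * (b / F) + d \<and> 1 - a / F \<le> e * (1 - b / F) + d"
proof
  have "a / F \<le> (e * b + F * d) / F" using assms by (simp add: divide_right_mono)
  also have "\<dots> = e * (b / F) + d" using assms(1) by (simp add: field_simps)
  finally show "a / F \<le> e * (b / F) + d" .
  have "1 - a / F = (F - a) / F" using assms(1) by (simp add: field_simps)
  also have "\<dots> \<le> (e * (F - b) + F * d) / F" using assms by (simp add: divide_right_mono)
  also have "\<dots> = e * (1 - b / F) + d" using assms(1) by (simp add: field_simps)
  finally show "1 - a / F \<le> e * (1 - b / F) + d" .
qed
theorem theorem1: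
  fixes M :: "'a measure" and n :: nat and \<epsilon> \<delta> :: real
    and I :: "'i set" and \<mu> :: "'i \<Rightarrow> (nat \<Rightarrow> 'a) measure"
    and \<phi> :: "(nat \<Rightarrow> 'a) \<Rightarrow> real"
  assumes "\<epsilon> > 0" and "\<delta> \<ge> 0" and "n \<ge> 1"
    and "\<And>i. i \<in> I \<Longrightarrow> exchangeable M n (\<mu> i)"
    and "\<phi> \<in> borel_measurable (prod_space M n)"
    and "\<And>x. x \<in> space (prod_space M n) \<Longrightarrow> 0 \<le> \<phi> x \<and> \<phi> x \<le> 1"
    and "dp_test M n \<epsilon> \<delta> \<phi>"
  shows "symmetrize n \<phi> \<in> borel_measurable (prod_space M n)
    \<and> (\<forall>x\<in>space (prod_space M n). 0 \<le> symmetrize n \<phi> x \<and> symmetrize n \<phi> x \<le> 1)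
    \<and> dp_test M n \<epsilon> \<delta> (symmetrize n \<phi>)
    \<and> (\<forall>i\<in>I. (\<integral>x. symmetrize n \<phi> x \<partial>\<mu> i) = (\<integral>x. \<phi> x \<partial>\<mu> i))
    \<and> (\<forall>x\<in>space (prod_space M n). \<forall>y\<in>space (prod_space M n).
         (\<forall>B\<in>sets M. empirical n x B = empirical n y B) \<longrightarrow>
         symmetrize n \<phi> x = symmetrize n \<phi> y)"
proof -
  let ?P = "{\<pi>. \<pi> permutes {..<n}}"
  let ?S = "prod_space M n"
  let ?F = "fact n :: real"
  have finP: "finite ?P" by (simp add: finite_permutations)
  have cardP: "card ?P = fact n" using card_permutations[of "{..<n}" n] by simp
  have Fpos: "?F > 0" by simp
  have symeq: "symmetrize n \<phi> x = (\<Sum>\<pi>\<in>?P. \<phi> (permute_coords n \<pi> x)) / ?F" for x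
    by (simp add: symmetrize_def)
  have sumle: "(\<Sum>\<pi>\<in>?P. f \<pi>) \<le> (\<Sum>\<pi>\<in>?P. g \<pi>)" if "\<And>\<pi>. \<pi> permutes {..<n} \<Longrightarrow> f \<pi> \<le> (g \<pi> :: real)" for f g
    using that by (intro sum_mono) auto
  have sumconst: "(\<Sum>\<pi>\<in>?P. c) = ?F * c" for c :: real
    using cardP by simp
  have m1: "(\<lambda>x. \<Sum>\<pi>\<in>?P. \<phi> (permute_coords n \<pi> x)) \<in> borel_measurable ?S"
    by (intro borel_measurable_sum measurable_compose[OF perm_meas assms(5)]) simp
  have meas: "symmetrize n \<phi> \<in> borel_measurable ?S"
  proof -
    have "symmetrize n \<phi> = (\<lambda>x. (\<Sum>\<pi>\<in>?P. \<phi> (permute_coords n \<pi> x)) / ?F)"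
      using symeq by (intro ext) simp
    then show ?thesis using m1 by simp
  qed
  have bnd: "\<forall>x\<in>space ?S. 0 \<le> symmetrize n \<phi> x \<and> symmetrize n \<phi> x \<le> 1"
  proof
    fix x assume x: "x \<in> space ?S"
    have "0 \<le> (\<Sum>\<pi>\<in>?P. \<phi> (permute_coords n \<pi> x))"
      using assms(6) perm_space[OF _ x] by (intro sum_nonneg) auto
    moreover have "(\<Sum>\<pi>\<in>?P. \<phi> (permute_coords n \<pi> x)) \<le> (\<Sum>\<pi>\<in>?P. 1)"
      using assms(6) perm_space[OF _ x] by (intro sumle) auto
    ultimately show "0 \<le> symmetrize n \<phi> x \<and> symmetrize n \<phi> x \<le> 1"
      unfolding symeq using sumconst[of 1] Fpos by simp
  qed
  have dp: "dp_test M n \<epsilon> \<delta> (symmetrize n \<phi>)"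
    unfolding dp_test_def
  proof (intro ballI impI)
    fix x x' assume x: "x \<in> space ?S" and x': "x' \<in> space ?S" and h: "hamming n x x' = 1"
    have each: "\<phi> (permute_coords n \<pi> x) \<le> exp \<epsilon> * \<phi> (permute_coords n \<pi> x') + \<delta> \<and>
        1 - \<phi> (permute_coords n \<pi> x) \<le> exp \<epsilon> * (1 - \<phi> (permute_coords n \<pi> x')) + \<delta>"
      if p: "\<pi> permutes {..<n}" for \<pi>
    proof -
      have hh: "hamming n (permute_coords n \<pi> x) (permute_coords n \<pi> x') = 1"
        using perm_hamming[OF p, of x x'] h by simp
      show ?thesis using assms(7) perm_space[OF p x] perm_space[OF p x'] hh
        unfolding dp_test_def by blast
    qed
    define a where "a = (\<Sum>\<pi>\<in>?P. \<phi> (permute_coords n \<pi> x))"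
    define b where "b = (\<Sum>\<pi>\<in>?P. \<phi> (permute_coords n \<pi> x'))"
    have "a \<le> (\<Sum>\<pi>\<in>?P. exp \<epsilon> * \<phi> (permute_coords n \<pi> x') + \<delta>)"
      unfolding a_def using each by (intro sumle) auto
    also have "\<dots> = exp \<epsilon> * b + ?F * \<delta>"
      unfolding b_def sum_aff[OF finP] cardP of_nat_fact ..
    finally have ab: "a \<le> exp \<epsilon> * b + ?F * \<delta>" .
    have "?F - a = (\<Sum>\<pi>\<in>?P. 1 - \<phi> (permute_coords n \<pi> x))"
      unfolding a_def sum_one_minus[OF finP] cardP of_nat_fact ..
    also have "\<dots> \<le> (\<Sum>\<pi>\<in>?P. exp \<epsilon> * (1 - \<phi> (permute_coords n \<pi> x')) + \<delta>)"
      using each by (intro sumle) auto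
    also have "\<dots> = exp \<epsilon> * (?F - b) + ?F * \<delta>"
      unfolding b_def sum_aff[OF finP] sum_one_minus[OF finP] cardP of_nat_fact ..
    finally have ab2: "?F - a \<le> exp \<epsilon> * (?F - b) + ?F * \<delta>" .
    have s1: "symmetrize n \<phi> x = a / ?F" "symmetrize n \<phi> x' = b / ?F"
      by (simp_all only: symeq a_def b_def)
    show "symmetrize n \<phi> x \<le> exp \<epsilon> * symmetrize n \<phi> x' + \<delta> \<and>
          1 - symmetrize n \<phi> x \<le> exp \<epsilon> * (1 - symmetrize n \<phi> x') + \<delta>"
      unfolding s1 using div_ineq[OF Fpos ab ab2] .
  qed
  have integ: "\<forall>i\<in>I. (\<integral>x. symmetrize n \<phi> x \<partial>\<mu> i) = (\<integral>x. \<phi> x \<partial>\<mu> i)"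
  proof
    fix i assume i: "i \<in> I"
    have ps: "prob_space (\<mu> i)" and se: "sets (\<mu> i) = sets ?S"
      and inv: "\<And>\<pi>. \<pi> permutes {..<n} \<Longrightarrow> distr (\<mu> i) ?S (permute_coords n \<pi>) = \<mu> i"
      using assms(4)[OF i] unfolding exchangeable_def by auto
    interpret prob_space "\<mu> i" by (rule ps)
    have sp: "space (\<mu> i) = space ?S" using se by (rule sets_eq_imp_space_eq)
    have phim: "\<phi> \<in> borel_measurable (\<mu> i)"
      using assms(5) measurable_cong_sets[OF se refl] by blast
    have pm: "permute_coords n \<pi> \<in> measurable (\<mu> i) ?S" if "\<pi> permutes {..<n}" for \<pi>
      using perm_meas[OF that] measurable_cong_sets[OF se refl] by blast
    have intg: "integrable (\<mu> i) (\<lambda>x. \<phi> (permute_coords n \<pi> x))" if p: "\<pi> permutes {..<n}" for \<pi>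
    proof (rule integrable_const_bound[where B=1])
      show "AE x in \<mu> i. norm (\<phi> (permute_coords n \<pi> x)) \<le> 1"
      proof (rule AE_I2)
        fix x assume "x \<in> space (\<mu> i)"
        then have "permute_coords n \<pi> x \<in> space ?S" using sp perm_space[OF p] by simp
        then have "0 \<le> \<phi> (permute_coords n \<pi> x) \<and> \<phi> (permute_coords n \<pi> x) \<le> 1" using assms(6) by blast
        then show "norm (\<phi> (permute_coords n \<pi> x)) \<le> 1" by simp
      qed
      show "(\<lambda>x. \<phi> (permute_coords n \<pi> x)) \<in> borel_measurable (\<mu> i)"
        using measurable_compose[OF pm[OF p] assms(5)] by simp
    qed
    have ieq: "(\<integral>x. \<phi> (permute_coords n \<pi> x) \<partial>\<mu> i) = (\<integral>x. \<phi> x \<partial>\<mu> i)" if p: "\<pi> permutes {..<n}" for \<pi>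
      using integral_distr[OF pm[OF p] assms(5)] inv[OF p] by simp
    have "(\<integral>x. symmetrize n \<phi> x \<partial>\<mu> i) = (\<integral>x. (\<Sum>\<pi>\<in>?P. \<phi> (permute_coords n \<pi> x)) / ?F \<partial>\<mu> i)"
      by (simp add: symeq)
    also have "\<dots> = (\<integral>x. (\<Sum>\<pi>\<in>?P. \<phi> (permute_coords n \<pi> x)) \<partial>\<mu> i) / ?F"
      by (rule integral_divide_zero)
    also have "(\<integral>x. (\<Sum>\<pi>\<in>?P. \<phi> (permute_coords n \<pi> x)) \<partial>\<mu> i) = (\<Sum>\<pi>\<in>?P. (\<integral>x. \<phi> (permute_coords n \<pi> x) \<partial>\<mu> i))"
      by (rule Bochner_Integration.integral_sum) (simp add: intg)
    also have "\<dots> = (\<Sum>\<pi>\<in>?P. (\<integral>x. \<phi> x \<partial>\<mu> i))"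
      using ieq by (intro sum.cong) auto
    also have "\<dots> = ?F * (\<integral>x. \<phi> x \<partial>\<mu> i)" by (rule sumconst)
    finally show "(\<integral>x. symmetrize n \<phi> x \<partial>\<mu> i) = (\<integral>x. \<phi> x \<partial>\<mu> i)" using Fpos by simp
  qed
  have emp: "\<forall>x\<in>space ?S. \<forall>y\<in>space ?S. (\<forall>B\<in>sets M. empirical n x B = empirical n y B) \<longrightarrow>
         symmetrize n \<phi> x = symmetrize n \<phi> y"
  proof (intro ballI impI)
    fix x y assume x: "x \<in> space ?S" and y: "y \<in> space ?S"
      and e: "\<forall>B\<in>sets M. empirical n x B = empirical n y B"
    have xs: "\<And>i. i < n \<Longrightarrow> x i \<in> space M" and ys: "\<And>i. i < n \<Longrightarrow> y i \<in> space M"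
      using x y by (auto simp: prod_space_def space_PiM PiE_iff)
    obtain p where p: "p permutes {..<n}"
      and pe: "\<forall>i\<in>{..<n}. {B\<in>sets M. y i \<in> B} = {B\<in>sets M. x (p i) \<in> B}"
      using image_mset_eq_implies_permutes[OF finite_lessThan count_eq[OF assms(3) xs ys e]] by blast
    have pt: "\<phi> (permute_coords n \<pi> y) = \<phi> (permute_coords n (p \<circ> \<pi>) x)" if q: "\<pi> permutes {..<n}" for \<pi>
    proof -
      have qp: "p \<circ> \<pi> permutes {..<n}" using permutes_compose[OF q p] .
      show ?thesis
      proof (rule indist_fun[where I="{..<n}" and M=M])
        show "\<phi> \<in> borel_measurable (Pi\<^sub>M {..<n} (\<lambda>_. M))" using assms(5) by (simp add: prod_space_def)
        show "permute_coords n \<pi> y \<in> space (Pi\<^sub>M {..<n} (\<lambda>_. M))"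
          using perm_space[OF q y] by (simp add: prod_space_def)
        show "permute_coords n (p \<circ> \<pi>) x \<in> space (Pi\<^sub>M {..<n} (\<lambda>_. M))"
          using perm_space[OF qp x] by (simp add: prod_space_def)
        fix j B assume j: "j \<in> {..<n}" and B: "B \<in> sets M"
        have "\<pi> j \<in> {..<n}" using permutes_in_image[OF q] j by simp
        then have "{B\<in>sets M. y (\<pi> j) \<in> B} = {B\<in>sets M. x (p (\<pi> j)) \<in> B}" using pe by blast
        then have "y (\<pi> j) \<in> B \<longleftrightarrow> x (p (\<pi> j)) \<in> B" using B by blast
        then show "permute_coords n \<pi> y j \<in> B \<longleftrightarrow> permute_coords n (p \<circ> \<pi>) x j \<in> B"
          using j by (simp add: permute_coords_def)
      qed
    qed
    have "(\<Sum>\<pi>\<in>?P. \<phi> (permute_coords n \<pi> y)) = (\<Sum>\<pi>\<in>?P. \<phi> (permute_coords n (p \<circ> \<pi>) x))"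
      using pt by (intro sum.cong) auto
    also have "\<dots> = (\<Sum>\<pi>\<in>?P. \<phi> (permute_coords n \<pi> x))"
      using setum_permutations_compose_left[OF p, of "\<lambda>\<pi>. \<phi> (permute_coords n \<pi> x)"] by simp
    finally show "symmetrize n \<phi> x = symmetrize n \<phi> y" by (simp add: symeq)
  qed
  show ?thesis using meas bnd dp integ emp by blast
qed

end
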